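(* Let $G$ be a $1$-series-parallel graph containing the edge $X_SX_T$. Then there exist $\epsilon>0$ and $N_0$ (depending only on $G$) such that for every $N\ge N_0$, every join instance over $G$ in which each edge relation has exactly $N$ tuples has $m$-width at most $2-\epsilon$.
   Context: A join over a graph $G$: each vertex is an attribute and each edge $\{X,Y\}$ is a binary relation with schema $(X,Y)$. A $1$-series-parallel graph consists of a source vertex $X_S$, a sink vertex $X_T$, and any number of paths of arbitrary length from $X_S$ to $X_T$, pairwise sharing no vertices other than $X_S,X_T$. For a join query $\mathcal R$ (set of relations, attribute set $\mathcal A$): $\mathrm{IN}=\sum_R|R|$, $\log=\log_{\mathrm{IN}}$; for a relation $S$, $A\subseteq\mathsf{attr}(S)$, $v\in\pi_A(S)$: $\mathsf{deg}(v,S,A)=|\{t\in S:\pi_A(t)=v\}|$; $d_{S,A}=\max_v\mathsf{deg}(v,S,A)$ for $A\ne\emptyset$, $d_{S,\emptyset}=|S|$; $d(A,B,S)=\log d_{\pi_B(S),A}$. Degree configurations: buckets $B_l=[2^l,2^{l+1})$ ordered by index; $c\in\mathcal C_2$ maps each $(R,A)$, $A\subseteq\mathsf{attr}(R)$, to a bucket with $A'\subseteq A\Rightarrow c(R,A)\le c(R,A')$, $c(R,\mathsf{attr}(R))=B_0$, $c(R,\emptyset)=B_{\lfloor\log_2|R|\rfloor}$; $R(c)=\{t\in R:\forall A,\ \mathsf{deg}(\pi_A(t),R,A)\in c(R,A)\}$, $\mathcal R(c)=\{R(c)\}$. For a set $\mathcal S$ of relations and $F\subseteq\mathcal A$, $m_F(\mathcal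 S)$ is the maximum of $s_F$ subject to $s_\emptyset=0$; $s_G\le s_{G'}$ for $G\subseteq G'$; $s_{B\cup E}\le s_{A\cup E}+d(A,B,S)$ for all $S\in\mathcal S$, $E\subseteq\mathcal A$, $A\subseteq B\subseteq\mathsf{attr}(S)$. A GHD of $\mathcal S$ is a pair $(\mathcal T,\chi)$, $\mathcal T$ a tree, $\chi$ mapping nodes to subsets of $\mathcal A$, such that every $S$ has a node $t$ with $\mathsf{attr}(S)\subseteq\chi(t)$ and for each attribute the nodes containing it form a connected subtree. $\mathsf{MW}(D,\mathcal S)=\max_t m_{\chi(t)}(\mathcal S)$, $\mathsf{MW}(\mathcal S)=\min_D\mathsf{MW}(D,\mathcal S)$, and the $m$-width of the instance is $\max_{c\in\mathcal C_2}\mathsf{MW}(\mathcal R(c))$. *)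

theory Defs
  imports Complex_Main "HOL-Library.FuncSet"
begin

definition path_edges :: "'v list \<Rightarrow> 'v set set" where
  "path_edges p = {{p ! i, p ! (i + 1)} | i. i + 1 < length p}"

definition one_sp_graph :: "'v set \<Rightarrow> 'v set set \<Rightarrow> 'v \<Rightarrow> 'v \<Rightarrow> bool" where
  "one_sp_graph V E xs xt \<longleftrightarrow> xs \<noteq> xt \<and>
     (\<exists>Ps :: 'v list set. finite Ps \<and>
        (\<forall>p\<in>Ps. 2 \<le> length p \<and> hd p = xs \<and> last p = xt \<and> distinct p) \<and>
        (\<forall>p\<in>Ps. \<forall>q\<in>Ps. p \<noteq> q \<longrightarrow> set p \<inter> set q = {xs, xt}) \<and>
        V = {xs, xt} \<union> (\<Union>p\<in>Ps. set p) \<and>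
        E = (\<Union>p\<in>Ps. path_edges p))"

text \<open>A tuple over schema A is a function in extensional A (value undefined outside A).  A join query over the edge
  set E is a family rel indexed by the edges, rel e being the relation with schema e.\<close>

definition join_instance :: "'v set set \<Rightarrow> ('v set \<Rightarrow> ('v \<Rightarrow> 'd) set) \<Rightarrow> nat \<Rightarrow> bool" where
  "join_instance E rel N \<longleftrightarrow> (\<forall>e\<in>E. rel e \<subseteq> extensional e \<and> finite (rel e) \<and> card (rel e) = N)"

definition proj :: "'v set \<Rightarrow> ('v \<Rightarrow> 'd) set \<Rightarrow> ('v \<Rightarrow> 'd) set" where
  "proj B S = (\<lambda>t. restrict t B) ` S"

definition deg :: "('v \<Rightarrow> 'd) \<Rightarrow> ('v \<Rightarrow> 'd) set \<Rightarrow> 'v set \<Rightarrow> nat" where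
  "deg v S A = card {t\<in>S. restrict t A = v}"

definition dmax :: "('v \<Rightarrow> 'd) set \<Rightarrow> 'v set \<Rightarrow> nat" where
  "dmax S A = (if A = {} then card S else Max (insert 0 ((\<lambda>t. deg (restrict t A) S A) ` S)))"

definition dlog :: "real \<Rightarrow> 'v set \<Rightarrow> 'v set \<Rightarrow> ('v \<Rightarrow> 'd) set \<Rightarrow> real" where
  "dlog IN A B S = log IN (real (dmax (proj B S) A))"

definition feasible :: "real \<Rightarrow> 'v set \<Rightarrow> 'v set set \<Rightarrow> ('v set \<Rightarrow> ('v \<Rightarrow> 'd) set)
    \<Rightarrow> ('v set \<Rightarrow> real) \<Rightarrow> bool" where
  "feasible IN Att E rel s \<longleftrightarrow>
     s {} = 0 \<and>
     (\<forall>G G'. G \<subseteq> G' \<and> G' \<subseteq> Att \<longrightarrow> s G \<le> s G') \<and>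
     (\<forall>e\<in>E. \<forall>E'. E' \<subseteq> Att \<longrightarrow> (\<forall>A B. A \<subseteq> B \<and> B \<subseteq> e \<longrightarrow>
         s (B \<union> E') \<le> s (A \<union> E') + dlog IN A B (rel e)))"

definition mval :: "real \<Rightarrow> 'v set \<Rightarrow> 'v set set \<Rightarrow> ('v set \<Rightarrow> ('v \<Rightarrow> 'd) set)
    \<Rightarrow> 'v set \<Rightarrow> real" where
  "mval IN Att E rel F = Sup {s F | s. feasible IN Att E rel s}"

text \<open>A tree on a finite nonempty node set T (nodes are naturals) with a symmetric,
  irreflexive edge relation TE: connected and with |T|-1 undirected edges.\<close>
definition is_tree :: "nat set \<Rightarrow> (nat \<times> nat) set \<Rightarrow> bool" where
  "is_tree T TE \<longleftrightarrow> finite T \<and> T \<noteq> {} \<and> TE \<subseteq> T \<times> T \<and> sym TE \<and> irrefl TE \<and>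
     (\<forall>u\<in>T. \<forall>v\<in>T. (u, v) \<in> TE\<^sup>*) \<and> card TE = 2 * (card T - 1)"

definition is_ghd :: "'v set \<Rightarrow> 'v set set \<Rightarrow> nat set \<Rightarrow> (nat \<times> nat) set \<Rightarrow> (nat \<Rightarrow> 'v set) \<Rightarrow> bool" where
  "is_ghd Att E T TE \<chi> \<longleftrightarrow> is_tree T TE \<and> (\<forall>t\<in>T. \<chi> t \<subseteq> Att) \<and>
     (\<forall>e\<in>E. \<exists>t\<in>T. e \<subseteq> \<chi> t) \<and>
     (\<forall>x\<in>Att. \<forall>u\<in>T. \<forall>v\<in>T. x \<in> \<chi> u \<and> x \<in> \<chi> v \<longrightarrow>
        (u, v) \<in> (TE \<inter> ({t\<in>T. x \<in> \<chi> t} \<times> {t\<in>T. x \<in> \<chi> t}))\<^sup>*)"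

definition MW_ghd :: "real \<Rightarrow> 'v set \<Rightarrow> 'v set set \<Rightarrow> ('v set \<Rightarrow> ('v \<Rightarrow> 'd) set)
    \<Rightarrow> nat set \<Rightarrow> (nat \<Rightarrow> 'v set) \<Rightarrow> real" where
  "MW_ghd IN Att E rel T \<chi> = Max ((\<lambda>t. mval IN Att E rel (\<chi> t)) ` T)"

definition MW :: "real \<Rightarrow> 'v set \<Rightarrow> 'v set set \<Rightarrow> ('v set \<Rightarrow> ('v \<Rightarrow> 'd) set) \<Rightarrow> real" where
  "MW IN Att E rel = Inf {MW_ghd IN Att E rel T \<chi> | T TE \<chi>. is_ghd Att E T TE \<chi>}"

text \<open>Bucket l is [2^l, 2^(l+1)); a configuration c assigns to relation e (indexed by its
  attribute set) and A \<subseteq> e a bucket index c e A.\<close>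
definition in_bucket :: "nat \<Rightarrow> nat \<Rightarrow> bool" where
  "in_bucket l n \<longleftrightarrow> 2 ^ l \<le> n \<and> n < 2 ^ (l + 1)"

definition degree_configs :: "'v set set \<Rightarrow> ('v set \<Rightarrow> ('v \<Rightarrow> 'd) set) \<Rightarrow> ('v set \<Rightarrow> 'v set \<Rightarrow> nat) set" where
  "degree_configs E rel = {c. \<forall>e\<in>E.
      (\<forall>A A'. A' \<subseteq> A \<and> A \<subseteq> e \<longrightarrow> c e A \<le> c e A') \<and>
      c e e = 0 \<and>
      c e {} = nat \<lfloor>log 2 (real (card (rel e)))\<rfloor>}"

definition restrict_config :: "('v set \<Rightarrow> ('v \<Rightarrow> 'd) set) \<Rightarrow> ('v set \<Rightarrow> 'v set \<Rightarrow> nat)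
    \<Rightarrow> ('v set \<Rightarrow> ('v \<Rightarrow> 'd) set)" where
  "restrict_config rel c = (\<lambda>e. {t\<in>rel e. \<forall>A. A \<subseteq> e \<longrightarrow> in_bucket (c e A) (deg (restrict t A) (rel e) A)})"

text \<open>IN of the instance over G, and its m-width (logarithms taken base IN of the
  original instance also for the sub-instances R(c)).\<close>
definition input_size :: "'v set set \<Rightarrow> ('v set \<Rightarrow> ('v \<Rightarrow> 'd) set) \<Rightarrow> nat" where
  "input_size E rel = (\<Sum>e\<in>E. card (rel e))"

definition m_width :: "'v set \<Rightarrow> 'v set set \<Rightarrow> ('v set \<Rightarrow> ('v \<Rightarrow> 'd) set) \<Rightarrow> real" where
  "m_width V E rel = Sup {MW (real (input_size E rel)) V E (restrict_config rel c) | c. c \<in> degree_configs E rel}"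

end

theory Submission
  imports Defs
begin

definition TD :: "nat set \<Rightarrow> (nat \<times> nat) set \<Rightarrow> (nat \<Rightarrow> 'v set) \<Rightarrow> bool" where
  "TD T TE \<chi> \<longleftrightarrow> is_tree T TE \<and> (\<forall>x. \<forall>u\<in>T. \<forall>v\<in>T. x \<in> \<chi> u \<and> x \<in> \<chi> v \<longrightarrow>
        (u, v) \<in> (TE \<inter> ({t\<in>T. x \<in> \<chi> t} \<times> {t\<in>T. x \<in> \<chi> t}))\<^sup>*)"

lemma TD_cong:
  assumes "TD T TE \<chi>" "\<And>t. t \<in> T \<Longrightarrow> \<chi>' t = \<chi> t"
  shows "TD T TE \<chi>'"
proof -
  have "{t\<in>T. x \<in> \<chi>' t} = {t\<in>T. x \<in> \<chi> t}" for x using assms(2) by auto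
  moreover have "\<forall>u\<in>T. \<forall>v\<in>T. (x \<in> \<chi>' u \<and> x \<in> \<chi>' v) = (x \<in> \<chi> u \<and> x \<in> \<chi> v)" for x
    using assms(2) by auto
  ultimately show ?thesis using assms(1) unfolding TD_def by simp
qed

definition PE :: "nat \<Rightarrow> nat \<Rightarrow> (nat \<times> nat) set" where
  "PE z n = (\<lambda>i. (i, Suc i)) ` {z..<z+n-1} \<union> (\<lambda>i. (Suc i, i)) ` {z..<z+n-1}"

lemma PE_path:
  assumes "z \<le> a" "a \<le> b" "b < z + n" "\<And>w. a \<le> w \<Longrightarrow> w \<le> b \<Longrightarrow> P w"
  shows "(a, b) \<in> (PE z n \<inter> ({t\<in>{z..<z+n}. P t} \<times> {t\<in>{z..<z+n}. P t}))\<^sup>* \<and>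
         (b, a) \<in> (PE z n \<inter> ({t\<in>{z..<z+n}. P t} \<times> {t\<in>{z..<z+n}. P t}))\<^sup>*"
  using assms
proof (induction b)
  case 0
  then show ?case by auto
next
  case (Suc b)
  show ?case
  proof (cases "a = Suc b")
    case True
    then show ?thesis by auto
  next
    case False
    then have ab: "a \<le> b" using Suc by auto
    from Suc.IH[OF Suc.prems(1) ab] Suc.prems have IH:
      "(a, b) \<in> (PE z n \<inter> ({t\<in>{z..<z+n}. P t} \<times> {t\<in>{z..<z+n}. P t}))\<^sup>*"
      "(b, a) \<in> (PE z n \<inter> ({t\<in>{z..<z+n}. P t} \<times> {t\<in>{z..<z+n}. P t}))\<^sup>*" by auto
    have e1: "(b, Suc b) \<in> PE z n \<inter> ({t\<in>{z..<z+n}. P t} \<times> {t\<in>{z..<z+n}. P t})"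
      using Suc.prems ab unfolding PE_def by auto
    have e2: "(Suc b, b) \<in> PE z n \<inter> ({t\<in>{z..<z+n}. P t} \<times> {t\<in>{z..<z+n}. P t})"
      using Suc.prems ab unfolding PE_def by auto
    show ?thesis using IH e1 e2
      by (meson converse_rtrancl_into_rtrancl rtrancl_into_rtrancl)
  qed
qed

lemma TD_path:
  assumes n: "n \<ge> 1"
    and contig: "\<And>x i j k. i \<le> j \<Longrightarrow> j \<le> k \<Longrightarrow> k < n \<Longrightarrow> x \<in> B i \<Longrightarrow> x \<in> B k \<Longrightarrow> x \<in> B j"
  shows "TD {z..<z+n} (PE z n) (\<lambda>t. B (t - z))"
proof -
  have c1: "card ((\<lambda>i. (i, Suc i)) ` {z..<z+n-1}) = n - 1"
    by (subst card_image) (auto simp: inj_on_def)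
  have c2: "card ((\<lambda>i. (Suc i, i)) ` {z..<z+n-1}) = n - 1"
    by (subst card_image) (auto simp: inj_on_def)
  have disj: "(\<lambda>i. (i, Suc i)) ` {z..<z+n-1} \<inter> (\<lambda>i. (Suc i, i)) ` {z..<z+n-1} = {}" by auto
  have cardPE: "card (PE z n) = 2 * (card {z..<z+n} - 1)"
    unfolding PE_def using c1 c2 disj by (simp add: card_Un_disjoint)
  have sub: "PE z n \<subseteq> {z..<z+n} \<times> {z..<z+n}" unfolding PE_def using n by auto
  have symm: "sym (PE z n)" unfolding PE_def sym_def by auto
  have irr: "irrefl (PE z n)" unfolding PE_def irrefl_def by auto
  have conn: "(u, v) \<in> (PE z n)\<^sup>*" if "u \<in> {z..<z+n}" "v \<in> {z..<z+n}" for u v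
  proof (cases "u \<le> v")
    case True
    from PE_path[of z u v n "\<lambda>_. True"] that True show ?thesis
      by (meson atLeastLessThan_iff inf_le1 rtrancl_mono subsetD)
  next
    case False
    from PE_path[of z v u n "\<lambda>_. True"] that False show ?thesis
      by (meson atLeastLessThan_iff inf_le1 rtrancl_mono subsetD nat_le_linear)
  qed
  have tree: "is_tree {z..<z+n} (PE z n)"
    unfolding is_tree_def using n cardPE sub symm irr conn by auto
  have ri: "(u, v) \<in> (PE z n \<inter> ({t\<in>{z..<z+n}. x \<in> B (t - z)} \<times> {t\<in>{z..<z+n}. x \<in> B (t - z)}))\<^sup>*"
    if "u \<in> {z..<z+n}" "v \<in> {z..<z+n}" "x \<in> B (u - z)" "x \<in> B (v - z)" for x u v
  proof (cases "u \<le> v")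
    case True
    have "\<And>w. u \<le> w \<Longrightarrow> w \<le> v \<Longrightarrow> x \<in> B (w - z)"
      using contig[of "u - z" _ "v - z" x] that by (metis atLeastLessThan_iff diff_le_mono less_diff_conv2 add.commute)
    then show ?thesis using PE_path[of z u v n "\<lambda>t. x \<in> B (t - z)"] that True by auto
  next
    case False
    have "\<And>w. v \<le> w \<Longrightarrow> w \<le> u \<Longrightarrow> x \<in> B (w - z)"
      using contig[of "v - z" _ "u - z" x] that False by (metis atLeastLessThan_iff diff_le_mono less_diff_conv2 add.commute)
    then show ?thesis using PE_path[of z v u n "\<lambda>t. x \<in> B (t - z)"] that False by auto
  qed
  show ?thesis unfolding TD_def using tree ri by blast
qed

lemma TD_glue:
  assumes t1: "TD T1 TE1 \<chi>" and t2: "TD T2 TE2 \<chi>" and dj: "T1 \<inter> T2 = {}"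
    and u1: "u1 \<in> T1" and u2: "u2 \<in> T2"
    and sh: "\<And>x a b. a \<in> T1 \<Longrightarrow> b \<in> T2 \<Longrightarrow> x \<in> \<chi> a \<Longrightarrow> x \<in> \<chi> b \<Longrightarrow> x \<in> \<chi> u1 \<and> x \<in> \<chi> u2"
  shows "TD (T1 \<union> T2) (TE1 \<union> TE2 \<union> {(u1,u2),(u2,u1)}) \<chi>"
proof -
  let ?T = "T1 \<union> T2" and ?TE = "TE1 \<union> TE2 \<union> {(u1,u2),(u2,u1)}"
  have tr1: "is_tree T1 TE1" and tr2: "is_tree T2 TE2" using t1 t2 unfolding TD_def by auto
  have fin: "finite T1" "finite T2" "T1 \<noteq> {}" "T2 \<noteq> {}" using tr1 tr2 unfolding is_tree_def by auto
  have s1: "TE1 \<subseteq> T1 \<times> T1" and s2: "TE2 \<subseteq> T2 \<times> T2" using tr1 tr2 unfolding is_tree_def by auto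
  have finTE: "finite TE1" "finite TE2" using finite_subset[OF s1] finite_subset[OF s2] fin by auto
  have u12: "u1 \<noteq> u2" using dj u1 u2 by auto
  have cT: "card ?T = card T1 + card T2" using fin dj by (simp add: card_Un_disjoint)
  have d1: "TE1 \<inter> TE2 = {}" using s1 s2 dj by auto
  have d2: "(TE1 \<union> TE2) \<inter> {(u1,u2),(u2,u1)} = {}" using s1 s2 dj u1 u2 by auto
  have cTE: "card ?TE = card TE1 + card TE2 + 2"
    using finTE d1 d2 u12 by (simp add: card_Un_disjoint)
  have c1: "card TE1 = 2 * (card T1 - 1)" and c2: "card TE2 = 2 * (card T2 - 1)"
    using tr1 tr2 unfolding is_tree_def by auto
  have p1: "card T1 \<ge> 1" "card T2 \<ge> 1" using fin by (auto simp: Suc_le_eq card_gt_0_iff)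
  have cardok: "card ?TE = 2 * (card ?T - 1)" using cT cTE c1 c2 p1 by simp
  have conn1: "(u,v) \<in> TE1\<^sup>*" if "u \<in> T1" "v \<in> T1" for u v using tr1 that unfolding is_tree_def by auto
  have conn2: "(u,v) \<in> TE2\<^sup>*" if "u \<in> T2" "v \<in> T2" for u v using tr2 that unfolding is_tree_def by auto
  have m1: "TE1\<^sup>* \<subseteq> ?TE\<^sup>*" by (rule rtrancl_mono) auto
  have m2: "TE2\<^sup>* \<subseteq> ?TE\<^sup>*" by (rule rtrancl_mono) auto
  have conn: "(u,v) \<in> ?TE\<^sup>*" if "u \<in> ?T" "v \<in> ?T" for u v
  proof -
    have e12: "(u1,u2) \<in> ?TE\<^sup>*" "(u2,u1) \<in> ?TE\<^sup>*" by auto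
    show ?thesis
    proof (cases "u \<in> T1")
      case True
      show ?thesis
      proof (cases "v \<in> T1")
        case True then show ?thesis using \<open>u \<in> T1\<close> conn1 m1 by blast
      next
        case False then have "v \<in> T2" using that by auto
        then show ?thesis using \<open>u \<in> T1\<close> conn1[of u u1] conn2[of u2 v] m1 m2 u1 u2 e12
          by (meson rtrancl_trans subsetD)
      qed
    next
      case False then have uT2: "u \<in> T2" using that by auto
      show ?thesis
      proof (cases "v \<in> T2")
        case True then show ?thesis using uT2 conn2 m2 by blast
      next
        case False then have "v \<in> T1" using that by auto
        then show ?thesis using uT2 conn2[of u u2] conn1[of u1 v] m1 m2 u1 u2 e12
          by (meson rtrancl_trans subsetD)
      qed
    qed
  qed
  have sub: "?TE \<subseteq> ?T \<times> ?T" using s1 s2 u1 u2 by auto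
  have sy: "sym ?TE" using tr1 tr2 unfolding is_tree_def sym_def by blast
  have ir: "irrefl ?TE" using tr1 tr2 u12 unfolding is_tree_def irrefl_def by blast
  have tree: "is_tree ?T ?TE"
    unfolding is_tree_def using fin sub sy ir cardok conn by blast
  have ri: "(u, v) \<in> (?TE \<inter> ({t\<in>?T. x \<in> \<chi> t} \<times> {t\<in>?T. x \<in> \<chi> t}))\<^sup>*"
    if "u \<in> ?T" "v \<in> ?T" "x \<in> \<chi> u" "x \<in> \<chi> v" for x u v
  proof -
    let ?S = "{t\<in>?T. x \<in> \<chi> t}"
    have r1: "(a,b) \<in> (?TE \<inter> (?S \<times> ?S))\<^sup>*" if "a \<in> T1" "b \<in> T1" "x \<in> \<chi> a" "x \<in> \<chi> b" for a b
    proof -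
      have "(a,b) \<in> (TE1 \<inter> ({t\<in>T1. x \<in> \<chi> t} \<times> {t\<in>T1. x \<in> \<chi> t}))\<^sup>*"
        using t1 that unfolding TD_def by blast
      moreover have "TE1 \<inter> ({t\<in>T1. x \<in> \<chi> t} \<times> {t\<in>T1. x \<in> \<chi> t}) \<subseteq> ?TE \<inter> (?S \<times> ?S)" by auto
      ultimately show ?thesis using rtrancl_mono by blast
    qed
    have r2: "(a,b) \<in> (?TE \<inter> (?S \<times> ?S))\<^sup>*" if "a \<in> T2" "b \<in> T2" "x \<in> \<chi> a" "x \<in> \<chi> b" for a b
    proof -
      have "(a,b) \<in> (TE2 \<inter> ({t\<in>T2. x \<in> \<chi> t} \<times> {t\<in>T2. x \<in> \<chi> t}))\<^sup>*"
        using t2 that unfolding TD_def by blast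
      moreover have "TE2 \<inter> ({t\<in>T2. x \<in> \<chi> t} \<times> {t\<in>T2. x \<in> \<chi> t}) \<subseteq> ?TE \<inter> (?S \<times> ?S)" by auto
      ultimately show ?thesis using rtrancl_mono by blast
    qed
    show ?thesis
    proof (cases "u \<in> T1")
      case uT1: True
      show ?thesis
      proof (cases "v \<in> T1")
        case True then show ?thesis using uT1 r1 that by blast
      next
        case False then have vT2: "v \<in> T2" using that by auto
        have xu: "x \<in> \<chi> u1" "x \<in> \<chi> u2" using sh[OF uT1 vT2] that by auto
        have "(u1,u2) \<in> ?TE \<inter> (?S \<times> ?S)" using xu u1 u2 by auto
        then show ?thesis using r1[OF uT1 u1 _ xu(1)] r2[OF u2 vT2 xu(2)] that
          by (meson rtrancl_into_rtrancl rtrancl_trans)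
      qed
    next
      case False then have uT2: "u \<in> T2" using that by auto
      show ?thesis
      proof (cases "v \<in> T2")
        case True then show ?thesis using uT2 r2 that by blast
      next
        case False then have vT1: "v \<in> T1" using that by auto
        have xu: "x \<in> \<chi> u1" "x \<in> \<chi> u2" using sh[OF vT1 uT2] that by auto
        have "(u2,u1) \<in> ?TE \<inter> (?S \<times> ?S)" using xu u1 u2 by auto
        then show ?thesis using r2[OF uT2 u2 _ xu(2)] r1[OF u1 vT1 xu(1)] that
          by (meson rtrancl_into_rtrancl rtrancl_trans)
      qed
    qed
  qed
  show ?thesis unfolding TD_def using tree ri by blast
qed

lemma feas_step:
  assumes "feasible IN Att E rel s" "e \<in> E" "X \<subseteq> Att" "A \<subseteq> B" "B \<subseteq> e"
  shows "s (B \<union> X) \<le> s (A \<union> X) + dlog IN A B (rel e)"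
  using assms unfolding feasible_def by blast

lemma feas_mono:
  assumes "feasible IN Att E rel s" "G \<subseteq> G'" "G' \<subseteq> Att"
  shows "s G \<le> s G'"
  using assms unfolding feasible_def by blast

lemma feas_empty: "feasible IN Att E rel s \<Longrightarrow> s {} = 0"
  unfolding feasible_def by blast

lemma log_nat_le:
  assumes "1 < b" "real n \<le> y" "1 \<le> y"
  shows "log b (real n) \<le> log b y"
proof (cases "n = 0")
  case True
  then show ?thesis using assms by (simp add: log_def)
next
  case False
  then show ?thesis using assms by simp
qed

lemma log_nat_nonneg: "1 < b \<Longrightarrow> 0 \<le> log b (real n)"
  by (cases "n = 0") (auto simp: log_def)

lemma R_sub: "restrict_config rel c e \<subseteq> rel e"
  unfolding restrict_config_def by auto

lemma dlog_B1:
  assumes "1 < IN" "finite (rel e)" "card (rel e) = N" "N \<ge> 1"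
  shows "dlog IN {} B (restrict_config rel c e) \<le> log IN N"
proof -
  have "card (proj B (restrict_config rel c e)) \<le> card (restrict_config rel c e)"
    unfolding proj_def by (rule card_image_le, rule finite_subset[OF R_sub[of rel c e]], rule assms(2))
  also have "\<dots> \<le> N" using card_mono[OF assms(2) R_sub[of rel c e]] assms(3) by simp
  finally have "real (card (proj B (restrict_config rel c e))) \<le> real N" by simp
  then show ?thesis unfolding dlog_def dmax_def using log_nat_le[OF assms(1)] assms(4) by simp
qed

lemma card_proj_x:
  assumes fin: "finite (rel e)" and x: "x \<in> e"
  shows "card (proj {x} (restrict_config rel c e)) * 2 ^ (c e {x}) \<le> card (rel e)"
proof -
  let ?R = "restrict_config rel c e"
  let ?S = "proj {x} ?R"
  let ?F = "\<lambda>v. {t \<in> rel e. restrict t {x} = v}"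
  have finR: "finite ?R" by (rule finite_subset[OF R_sub[of rel c e] fin])
  have finS: "finite ?S" unfolding proj_def using finR by simp
  have lb: "2 ^ (c e {x}) \<le> card (?F v)" if "v \<in> ?S" for v
  proof -
    obtain t where t: "t \<in> ?R" "v = restrict t {x}" using \<open>v \<in> ?S\<close> unfolding proj_def by auto
    have "in_bucket (c e {x}) (deg (restrict t {x}) (rel e) {x})"
      using t(1) x unfolding restrict_config_def by auto
    then show ?thesis using t(2) unfolding in_bucket_def deg_def by auto
  qed
  have "card ?S * 2 ^ (c e {x}) \<le> (\<Sum>v\<in>?S. card (?F v))"
    using sum_bounded_below[of ?S "2 ^ (c e {x})" "\<lambda>v. card (?F v)"] lb by (simp add: mult.commute)
  also have "\<dots> = card (\<Union>v\<in>?S. ?F v)"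
    by (rule card_UN_disjoint[symmetric]) (use finS fin in auto)
  also have "\<dots> \<le> card (rel e)" by (rule card_mono) (use fin in auto)
  finally show ?thesis .
qed

lemma proj_self:
  assumes "S \<subseteq> extensional e" shows "proj e S = S"
proof -
  have "restrict t e = t" if "t \<in> S" for t using assms that extensional_restrict by blast
  then show ?thesis unfolding proj_def by (metis (no_types, lifting) image_cong image_ident)
qed

lemma dmax_x:
  assumes fin: "finite (rel e)" and ext: "rel e \<subseteq> extensional e" and x: "x \<in> e"
  shows "dmax (proj e (restrict_config rel c e)) {x} \<le> 2 ^ (c e {x} + 1)"
proof -
  let ?R = "restrict_config rel c e"
  have pr: "proj e ?R = ?R" using proj_self ext R_sub by (metis subset_trans)
  have finR: "finite ?R" by (rule finite_subset[OF R_sub[of rel c e] fin])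
  have b: "deg (restrict t {x}) ?R {x} \<le> 2 ^ (c e {x} + 1)" if "t \<in> ?R" for t
  proof -
    have "in_bucket (c e {x}) (deg (restrict t {x}) (rel e) {x})"
      using that x unfolding restrict_config_def by auto
    then have "deg (restrict t {x}) (rel e) {x} \<le> 2 ^ (c e {x} + 1)" unfolding in_bucket_def by simp
    moreover have "deg (restrict t {x}) ?R {x} \<le> deg (restrict t {x}) (rel e) {x}"
      unfolding deg_def by (rule card_mono) (use fin R_sub in auto)
    ultimately show ?thesis by linarith
  qed
  show ?thesis unfolding dmax_def pr using finR b by (auto intro!: Max.boundedI)
qed

locale sp =
  fixes V :: "'v set" and E :: "'v set set" and xs xt :: 'v and Ps :: "'v list set"
    and rel :: "'v set \<Rightarrow> ('v \<Rightarrow> 'd) set" and N :: nat and c :: "'v set \<Rightarrow> 'v set \<Rightarrow> nat"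
    and \<delta> :: real
  assumes finV: "finite V"
    and neq: "xs \<noteq> xt"
    and finPs: "finite Ps"
    and pathP: "\<And>p. p \<in> Ps \<Longrightarrow> 2 \<le> length p \<and> hd p = xs \<and> last p = xt \<and> distinct p"
    and disjP: "\<And>p q. p \<in> Ps \<Longrightarrow> q \<in> Ps \<Longrightarrow> p \<noteq> q \<Longrightarrow> set p \<inter> set q = {xs, xt}"
    and Vdef: "V = {xs, xt} \<union> (\<Union>p\<in>Ps. set p)"
    and Edef: "E = (\<Union>p\<in>Ps. path_edges p)"
    and st: "{xs, xt} \<in> E"
    and ji: "join_instance E rel N"
    and N4: "4 ^ card V \<le> N"
    and \<delta>def: "\<delta> = 1 / (4 * real (card V))"
begin

definition IN :: real where "IN = real (input_size E rel)"
definition ell :: real where "ell = log IN (real N)"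
definition R where "R = restrict_config rel c"
definition heavy :: "'v \<Rightarrow> bool" where
  "heavy x \<longleftrightarrow> (\<exists>e\<in>E. x \<in> e \<and> real N powr \<delta> \<le> 2 ^ (c e {x}))"
definition cheap :: "'v set \<Rightarrow> bool" where
  "cheap F \<longleftrightarrow> (\<forall>s. feasible IN V E R s \<longrightarrow> s F \<le> 2 - \<delta>)"

lemma edge_sub: "e \<in> E \<Longrightarrow> e \<subseteq> V"
  using Edef Vdef unfolding path_edges_def by auto

lemma finE: "finite E"
proof -
  have "E \<subseteq> Pow V" using edge_sub by auto
  then show ?thesis using finite_subset[of E "Pow V"] finV by simp
qed

lemma cardV: "card V \<ge> 2"
proof -
  have "{xs, xt} \<subseteq> V" using Vdef by auto
  then have "card {xs, xt} \<le> card V" using card_mono[OF finV] by blast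
  then show ?thesis using neq by simp
qed

lemma Nge: "N \<ge> 16"
proof -
  have "(4::nat) ^ 2 \<le> 4 ^ card V" using cardV by (intro power_increasing) auto
  then show ?thesis using N4 by simp
qed

lemma rel_props: "e \<in> E \<Longrightarrow> rel e \<subseteq> extensional e \<and> finite (rel e) \<and> card (rel e) = N"
  using ji unfolding join_instance_def by blast

lemma IN_eq: "IN = real (card E) * real N"
  unfolding IN_def input_size_def using rel_props by simp

lemma cardE: "card E \<ge> 1"
  using st finE by (metis One_nat_def Suc_leI card_gt_0_iff empty_iff)

lemma IN_ge: "real N \<le> IN"
proof -
  have "real N * 1 \<le> real N * real (card E)" using cardE by (intro mult_left_mono) auto
  then show ?thesis unfolding IN_eq by (simp add: mult.commute)
qed

lemma IN_gt1: "1 < IN" using IN_ge Nge by linarith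

lemma ell_pos: "0 < ell" unfolding ell_def using IN_gt1 Nge by simp

lemma ell_le1: "ell \<le> 1" unfolding ell_def using IN_gt1 Nge IN_ge by simp

lemma delta_pos: "0 < \<delta>" unfolding \<delta>def using cardV by simp

lemma delta_small: "\<delta> \<le> 1/8"
proof -
  have "real (card V) \<ge> 2" using cardV by simp
  then show ?thesis unfolding \<delta>def by (simp add: field_simps)
qed

lemma M_delta: "real (card V) * \<delta> = 1/4"
  unfolding \<delta>def using cardV by simp

lemma C0: "feasible IN V E R s \<Longrightarrow> e \<in> E \<Longrightarrow> s e \<le> ell"
proof -
  assume f: "feasible IN V E R s" and e: "e \<in> E"
  have "s (e \<union> {}) \<le> s ({} \<union> {}) + dlog IN {} e (R e)"
    by (rule feas_step[OF f e]) auto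
  moreover have "dlog IN {} e (R e) \<le> ell"
    unfolding R_def ell_def using rel_props[OF e] Nge by (intro dlog_B1[OF IN_gt1]) auto
  ultimately show ?thesis using feas_empty[OF f] by simp
qed

lemma light_bound:
  assumes e: "e \<in> E" and y: "y \<in> e" and l: "\<not> (real N powr \<delta> \<le> 2 ^ (c e {y}))"
  shows "dlog IN {y} e (R e) \<le> log IN 2 + \<delta> * ell"
proof -
  have d: "dmax (proj e (R e)) {y} \<le> 2 ^ (c e {y} + 1)"
    unfolding R_def using rel_props[OF e] y by (intro dmax_x) auto
  have d': "real (dmax (proj e (R e)) {y}) \<le> 2 ^ (c e {y} + 1)"
  proof -
    have "real (dmax (proj e (R e)) {y}) \<le> real ((2::nat) ^ (c e {y} + 1))" using d by (simp only: of_nat_le_iff)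
    then show ?thesis by simp
  qed
  have "dlog IN {y} e (R e) \<le> log IN (2 ^ (c e {y} + 1))"
    unfolding dlog_def by (rule log_nat_le[OF IN_gt1 d'], rule one_le_power, simp)
  also have "\<dots> \<le> log IN (2 * real N powr \<delta>)"
    using l IN_gt1 Nge by simp
  also have "\<dots> = log IN 2 + \<delta> * ell"
    unfolding ell_def using Nge by (simp add: log_mult log_powr)
  finally show ?thesis .
qed

lemma heavy_bound:
  assumes e: "e \<in> E" and y: "y \<in> e" and h: "real N powr \<delta> \<le> 2 ^ (c e {y})"
  shows "dlog IN {} {y} (R e) \<le> (1 - \<delta>) * ell"
proof -
  let ?k = "card (proj {y} (R e))"
  have k: "?k * 2 ^ (c e {y}) \<le> N"
    unfolding R_def using card_proj_x[of rel e y c] rel_props[OF e] y by simp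
  have Npos: "0 < real N" using Nge by simp
  have pp: "0 < real N powr \<delta>" using Npos by simp
  have "real ?k * real N powr \<delta> \<le> real ?k * 2 ^ (c e {y})"
    using h by (simp add: mult_left_mono)
  also have "\<dots> \<le> real N" using k by (metis of_nat_le_iff of_nat_mult of_nat_numeral of_nat_power)
  finally have "real ?k \<le> real N / real N powr \<delta>" using pp by (simp add: field_simps)
  also have "\<dots> = real N powr (1 - \<delta>)" using Npos by (simp add: powr_diff)
  finally have kb: "real ?k \<le> real N powr (1 - \<delta>)" .
  have ge1: "1 \<le> real N powr (1 - \<delta>)" using Nge delta_small by (intro ge_one_powr_ge_zero) auto
  have "dlog IN {} {y} (R e) \<le> log IN (real N powr (1 - \<delta>))"
    unfolding dlog_def dmax_def by simp (rule log_nat_le[OF IN_gt1 kb ge1])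
  also have "\<dots> = (1 - \<delta>) * ell" unfolding ell_def by (simp add: log_powr)
  finally show ?thesis .
qed

lemma fan_cost:
  assumes f: "feasible IN V E R s" and hx: "heavy x" and fE: "f \<in> E"
  shows "s (insert x f) \<le> (2 - \<delta>) * ell"
proof -
  obtain e where e: "e \<in> E" "x \<in> e" "real N powr \<delta> \<le> 2 ^ (c e {x})" using hx unfolding heavy_def by blast
  have xV: "x \<in> V" using e edge_sub by auto
  have "s ({x} \<union> {}) \<le> s ({} \<union> {}) + dlog IN {} {x} (R e)"
    by (rule feas_step[OF f e(1)]) (use e in auto)
  then have sx: "s {x} \<le> (1 - \<delta>) * ell" using heavy_bound[OF e] feas_empty[OF f] by simp
  have "s (f \<union> {x}) \<le> s ({} \<union> {x}) + dlog IN {} f (R f)"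
    by (rule feas_step[OF f fE]) (use xV in auto)
  moreover have "dlog IN {} f (R f) \<le> ell"
    unfolding R_def ell_def using rel_props[OF fE] Nge by (intro dlog_B1[OF IN_gt1]) auto
  ultimately have "s (f \<union> {x}) \<le> (2 - \<delta>) * ell" using sx by (simp add: algebra_simps)
  then show ?thesis by (simp add: insert_commute)
qed

lemma final_bound: "ell + real (card V) * (log IN 2 + \<delta> * ell) \<le> (2 - \<delta>) * ell"
proof -
  have lnN: "2 * real (card V) * ln 2 \<le> ln (real N)"
  proof -
    have "real (4 ^ card V) \<le> real N" using N4 by linarith
    then have "ln (real (4 ^ card V)) \<le> ln (real N)" using Nge by simp
    moreover have "ln (real (4 ^ card V)) = real (card V) * ln 4" by (simp add: ln_realpow)
    moreover have "ln (4::real) = 2 * ln 2"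
      using ln_realpow[of 2 2] by simp
    ultimately show ?thesis by simp
  qed
  have lnIN: "0 < ln IN" using IN_gt1 by simp
  have "2 * real (card V) * log IN 2 \<le> ell"
    unfolding ell_def log_def using lnN lnIN by (simp add: divide_right_mono)
  then have a: "real (card V) * log IN 2 \<le> ell / 2" by simp
  have "ell + real (card V) * (log IN 2 + \<delta> * ell) = ell + real (card V) * log IN 2 + (real (card V) * \<delta>) * ell"
    by (simp add: algebra_simps)
  also have "\<dots> = ell + real (card V) * log IN 2 + ell / 4" using M_delta by simp
  also have "\<dots> \<le> ell + ell / 2 + ell / 4" using a by simp
  finally have b: "ell + real (card V) * (log IN 2 + \<delta> * ell) \<le> ell + ell / 2 + ell / 4" .
  have c: "\<delta> * ell \<le> 1/8 * ell" using mult_right_mono[OF delta_small, of ell] ell_pos by simp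
  have "(2 - \<delta>) * ell = 2 * ell - \<delta> * ell" by (simp add: algebra_simps)
  then show ?thesis using b c ell_pos by linarith
qed

lemma to_bound: "x \<le> (2 - \<delta>) * ell \<Longrightarrow> x \<le> 2 - \<delta>"
proof -
  assume "x \<le> (2 - \<delta>) * ell"
  moreover have "(2 - \<delta>) * ell \<le> (2 - \<delta>) * 1" using delta_small by (intro mult_left_mono[OF ell_le1]) simp
  ultimately show ?thesis by simp
qed

end

lemma mod_lt2: "x < 2 * n \<Longrightarrow> (x::nat) mod n = (if x < n then x else x - n)"
  by (simp add: le_mod_geq)

context sp begin

lemma pe_mem: "p \<in> Ps \<Longrightarrow> i + 1 < length p \<Longrightarrow> {p ! i, p ! (i + 1)} \<in> E"
  unfolding Edef path_edges_def by blast

lemma setp_V: "p \<in> Ps \<Longrightarrow> set p \<subseteq> V" using Vdef by auto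

lemma walk:
  assumes p: "p \<in> Ps" and f: "feasible IN V E R s"
    and l: "\<And>i. i + 2 < length p \<Longrightarrow> \<not> heavy (p ! i)"
  shows "s (set p) \<le> ell + real (length p - 2) * (log IN 2 + \<delta> * ell)"
proof -
  let ?w = "log IN 2 + \<delta> * ell"
  have pp: "2 \<le> length p" "hd p = xs" "last p = xt" "distinct p" using pathP[OF p] by auto
  have claim: "i + 1 < length p \<Longrightarrow> s (insert xt (set (take (i+1) p))) \<le> ell + real i * ?w" for i
  proof (induction i)
    case 0
    have "take 1 p = [p ! 0]" using pp by (cases p) auto
    moreover have "p ! 0 = xs" using pp by (metis hd_conv_nth list.size(3) not_numeral_le_zero)
    ultimately have "insert xt (set (take (0+1) p)) = {xs, xt}" by auto
    then show ?case using C0[OF f st] by simp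
  next
    case (Suc i)
    let ?X = "insert xt (set (take (i+1) p))"
    let ?e = "{p ! i, p ! (i + 1)}"
    have eE: "?e \<in> E" using pe_mem[OF p] Suc.prems by simp
    have XV: "?X \<subseteq> V" using setp_V[OF p] Vdef set_take_subset by fastforce
    have step: "s (?e \<union> ?X) \<le> s ({p ! i} \<union> ?X) + dlog IN {p ! i} ?e (R ?e)"
      by (rule feas_step[OF f eE XV]) auto
    have t1: "take (i+1) p = take i p @ [p ! i]" using Suc.prems by (simp add: take_Suc_conv_app_nth)
    have t2: "take (Suc i + 1) p = take (i+1) p @ [p ! (i+1)]" using Suc.prems by (simp add: take_Suc_conv_app_nth)
    have a: "{p ! i} \<union> ?X = ?X" using t1 by auto
    have b: "?e \<union> ?X = insert xt (set (take (Suc i + 1) p))" using t1 t2 by auto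
    have nh: "\<not> heavy (p ! i)" using l Suc.prems by simp
    have lb: "dlog IN {p ! i} ?e (R ?e) \<le> ?w"
      using nh eE unfolding heavy_def by (intro light_bound) auto
    have "s (insert xt (set (take (Suc i + 1) p))) \<le> s ?X + ?w" using step a b lb by simp
    also have "\<dots> \<le> ell + real i * ?w + ?w" using Suc by simp
    finally show ?case by (simp add: algebra_simps)
  qed
  have "insert xt (set (take (length p - 2 + 1) p)) = set p"
  proof -
    have "take (length p - 1) p = butlast p" by (simp add: butlast_conv_take)
    moreover have "p = butlast p @ [last p]" using pp by (metis append_butlast_last_id list.size(3) not_numeral_le_zero)
    moreover have "length p - 2 + 1 = length p - 1" using pp by simp
    ultimately show ?thesis using pp by (metis Un_insert_right append.right_neutral list.simps(15) set_append sup_bot.right_neutral)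
  qed
  then show ?thesis using claim[of "length p - 2"] pp by simp
qed

lemma walk_cheap:
  assumes p: "p \<in> Ps" and l: "\<And>i. i + 2 < length p \<Longrightarrow> \<not> heavy (p ! i)"
  shows "cheap (set p)"
  unfolding cheap_def
proof (intro allI impI)
  fix s assume f: "feasible IN V E R s"
  have pp: "distinct p" using pathP[OF p] by auto
  have "length p \<le> card V" using pp setp_V[OF p] finV by (metis card_mono distinct_card)
  then have lm: "real (length p - 2) \<le> real (card V)" by simp
  have w0: "0 \<le> log IN 2 + \<delta> * ell" using IN_gt1 delta_pos ell_pos by simp
  have "s (set p) \<le> ell + real (length p - 2) * (log IN 2 + \<delta> * ell)" by (rule walk[OF p f l])
  also have "\<dots> \<le> ell + real (card V) * (log IN 2 + \<delta> * ell)" using lm w0 by (simp add: mult_right_mono)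
  also have "\<dots> \<le> (2 - \<delta>) * ell" by (rule final_bound)
  finally show "s (set p) \<le> 2 - \<delta>" by (rule to_bound)
qed

lemma leg_single:
  assumes p: "p \<in> Ps" and l: "\<And>i. i + 2 < length p \<Longrightarrow> \<not> heavy (p ! i)"
  shows "(\<exists>(n::nat) (B::nat \<Rightarrow> 'v set) (j::nat). 1 \<le> n \<and>
     (\<forall>x i m k. i \<le> m \<longrightarrow> m \<le> k \<longrightarrow> k < n \<longrightarrow> x \<in> B i \<longrightarrow> x \<in> B k \<longrightarrow> x \<in> B m) \<and>
     (\<forall>i<n. B i \<subseteq> set p \<and> cheap (B i)) \<and> j < n \<and> {xs, xt} \<subseteq> B j \<and>
     (\<forall>e\<in>path_edges p. \<exists>i<n. e \<subseteq> B i))"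
proof -
  have pp: "2 \<le> length p" "hd p = xs" "last p = xt" using pathP[OF p] by auto
  have a1: "{xs, xt} \<subseteq> set p" using pp
    by (metis empty_subsetI hd_in_set insert_subset last_in_set list.size(3) not_numeral_le_zero)
  have a2: "\<forall>e\<in>path_edges p. e \<subseteq> set p" unfolding path_edges_def by auto
  have a3: "cheap (set p)" by (rule walk_cheap[OF p l])
  show ?thesis
    apply (rule exI[where x="1::nat"])
    apply (rule exI[where x="\<lambda>_::nat. set p"])
    apply (rule exI[where x="0::nat"])
    using a1 a2 a3 by auto
qed

lemma leg_fan:
  assumes p: "p \<in> Ps" and j: "j + 2 < length p" and h: "heavy (p ! j)"
  shows "(\<exists>(n::nat) (B::nat \<Rightarrow> 'v set) (j::nat). 1 \<le> n \<and>
     (\<forall>x i m k. i \<le> m \<longrightarrow> m \<le> k \<longrightarrow> k < n \<longrightarrow> x \<in> B i \<longrightarrow> x \<in> B k \<longrightarrow> x \<in> B m) \<and>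
     (\<forall>i<n. B i \<subseteq> set p \<and> cheap (B i)) \<and> j < n \<and> {xs, xt} \<subseteq> B j \<and>
     (\<forall>e\<in>path_edges p. \<exists>i<n. e \<subseteq> B i))"
proof -
  define n where "n = length p"
  have pp: "2 \<le> n" "hd p = xs" "last p = xt" "distinct p" using pathP[OF p] n_def by auto
  have n3: "3 \<le> n" and jn: "j < n" using j n_def by auto
  define d where "d i = p ! ((i + j) mod n)" for i
  define B where "B k = {d 0, d (k+1), d (k+2)}" for k
  have p0: "p ! 0 = xs" using pp n_def by (metis hd_conv_nth list.size(3) not_numeral_le_zero)
  have pl: "p ! (n - 1) = xt" using pp n_def by (metis last_conv_nth list.size(3) not_numeral_le_zero)
  have dinj: "a = b" if "a < n" "b < n" "d a = d b" for a b
  proof -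
    have lt: "(a + j) mod n < length p" "(b + j) mod n < length p" using n3 n_def by (auto intro!: mod_less_divisor)
    have "(a + j) mod n = (b + j) mod n"
      using that(3) nth_eq_iff_index_eq[OF pp(4) lt] unfolding d_def by simp
    then show ?thesis using that jn mod_lt2[of "a+j" n] mod_lt2[of "b+j" n] by (auto split: if_splits)
  qed
  have dset: "d i \<in> set p" for i unfolding d_def n_def by (rule nth_mem, rule mod_less_divisor) (use n3 n_def in auto)
  have d0: "d 0 = p ! j" unfolding d_def using jn by simp
  have dn: "d n = d 0" unfolding d_def by simp
  have cycE: "{d r, d (Suc r)} \<in> E" for r
  proof -
    define a where "a = (r + j) mod n"
    have an: "a < n" unfolding a_def using n3 by simp
    have sa: "(Suc r + j) mod n = (if Suc a = n then 0 else Suc a)"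
      unfolding a_def by (simp add: mod_Suc)
    show ?thesis
    proof (cases "Suc a = n")
      case True
      have ar: "(r + j) mod n = n - 1" using True a_def by simp
      have br: "(Suc r + j) mod n = 0" using sa True by simp
      have "{d r, d (Suc r)} = {xt, xs}" unfolding d_def using ar br p0 pl by simp
      then show ?thesis using st by (simp add: insert_commute)
    next
      case False
      then have "a + 1 < n" using an by simp
      then have "{p ! a, p ! (a + 1)} \<in> E" using pe_mem[OF p] n_def by simp
      then show ?thesis unfolding d_def using sa False a_def by simp
    qed
  qed
  have pos: "p ! a = d ((a + n - j) mod n) \<and> p ! ((a + 1) mod n) = d (Suc ((a + n - j) mod n))"
    if "a < n" for a
  proof -
    have e1: "((a + n - j) mod n + j) mod n = a"
      using that jn by (metis add.commute le_add_diff_inverse2 less_imp_le_nat mod_add_right_eq mod_add_self2 mod_less trans_le_add2)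
    have e2: "(Suc ((a + n - j) mod n) + j) mod n = (a + 1) mod n"
      using e1 by (metis add_Suc mod_Suc_eq Suc_eq_plus1)
    show ?thesis unfolding d_def using e1 e2 by simp
  qed
  have cover: "\<exists>k<n-2. {d r, d (Suc r)} \<subseteq> B k" if "r < n" for r
  proof (cases "r = 0")
    case True then show ?thesis using n3 unfolding B_def by (intro exI[of _ 0]) auto
  next
    case False
    show ?thesis
    proof (cases "r = n - 1")
      case True
      then have "Suc r = n" using n3 by simp
      then show ?thesis using n3 True dn unfolding B_def
        by (intro exI[of _ "n - 3"]) (auto simp: numeral_3_eq_3 Suc_diff_Suc)
    next
      case False2: False
      then show ?thesis using n3 False that unfolding B_def
        by (intro exI[of _ "r - 1"]) auto
    qed
  qed
  have contig: "x \<in> B m" if hh: "i \<le> m" "m \<le> k" "k < n - 2" "x \<in> B i" "x \<in> B k" for x i m k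
  proof (cases "x = d 0 \<or> m = i \<or> m = k")
    case True then show ?thesis using hh unfolding B_def by auto
  next
    case False
    then have ik: "i + 2 \<le> k" using hh by auto
    obtain a where a: "a \<in> {i+1, i+2}" "x = d a" using hh(4) False unfolding B_def by auto
    obtain b where b: "b \<in> {k+1, k+2}" "x = d b" using hh(5) False unfolding B_def by auto
    have "a < n" "b < n" using a b hh by auto
    then have "a = b" using dinj a b by simp
    then show ?thesis using a b ik by auto
  qed
  have edges: "\<forall>e\<in>path_edges p. \<exists>i<n-2. e \<subseteq> B i"
  proof
    fix e assume "e \<in> path_edges p"
    then obtain a where a: "a + 1 < n" "e = {p ! a, p ! (a + 1)}" unfolding path_edges_def n_def by auto
    have "(a + 1) mod n = a + 1" using a by simp
    then have "e = {d ((a + n - j) mod n), d (Suc ((a + n - j) mod n))}" using pos[of a] a by auto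
    moreover have "(a + n - j) mod n < n" using n3 by simp
    ultimately show "\<exists>i<n-2. e \<subseteq> B i" using cover by metis
  qed
  obtain k0 where k0: "k0 < n - 2" "{xs, xt} \<subseteq> B k0"
  proof -
    have "n - 1 < n" using n3 by simp
    have "(n - 1 + 1) mod n = 0" using n3 by simp
    then have "{xt, xs} = {d ((n - 1 + n - j) mod n), d (Suc ((n - 1 + n - j) mod n))}"
      using pos[of "n - 1"] n3 p0 pl by auto
    moreover have "(n - 1 + n - j) mod n < n" using n3 by simp
    ultimately show ?thesis using cover that by (metis insert_commute)
  qed
  have bags: "B i \<subseteq> set p \<and> cheap (B i)" if "i < n - 2" for i
  proof
    show "B i \<subseteq> set p" unfolding B_def using dset by auto
    show "cheap (B i)" unfolding cheap_def
    proof (intro allI impI)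
      fix s assume f: "feasible IN V E R s"
      have "B i = insert (d 0) {d (i+1), d (Suc (i+1))}" unfolding B_def by simp
      moreover have "s (insert (d 0) {d (i+1), d (Suc (i+1))}) \<le> (2 - \<delta>) * ell"
        using fan_cost[OF f _ cycE] h d0 by simp
      ultimately show "s (B i) \<le> 2 - \<delta>" using to_bound by simp
    qed
  qed
  show ?thesis 
    apply (rule exI[where x="n - 2"])
    apply (rule exI[where x=B])
    apply (rule exI[where x=k0])
    using n3 contig bags k0 edges by auto
qed

lemma leg_exists: "p \<in> Ps \<Longrightarrow> (\<exists>(n::nat) (B::nat \<Rightarrow> 'v set) (j::nat). 1 \<le> n \<and>
     (\<forall>x i m k. i \<le> m \<longrightarrow> m \<le> k \<longrightarrow> k < n \<longrightarrow> x \<in> B i \<longrightarrow> x \<in> B k \<longrightarrow> x \<in> B m) \<and>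
     (\<forall>i<n. B i \<subseteq> set p \<and> cheap (B i)) \<and> j < n \<and> {xs, xt} \<subseteq> B j \<and>
     (\<forall>e\<in>path_edges p. \<exists>i<n. e \<subseteq> B i))"
proof -
  assume p: "p \<in> Ps"
  show ?thesis
  proof (cases "\<forall>i. i + 2 < length p \<longrightarrow> \<not> heavy (p ! i)")
    case True
    then show ?thesis using leg_single[OF p] by blast
  next
    case False
    then obtain i where "i + 2 < length p" "heavy (p ! i)" by blast
    then show ?thesis using leg_fan[OF p] by blast
  qed
qed

end

context sp begin

lemma cheap_st: "cheap {xs, xt}"
  unfolding cheap_def
proof (intro allI impI)
  fix s assume f: "feasible IN V E R s"
  have "s {xs, xt} \<le> ell" by (rule C0[OF f st])
  also have "\<dots> \<le> (2 - \<delta>) * ell" using delta_small ell_pos by (simp add: algebra_simps)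
  finally show "s {xs, xt} \<le> 2 - \<delta>" by (rule to_bound)
qed

definition Inv :: "'v list set \<Rightarrow> bool" where
  "Inv S \<longleftrightarrow> (\<exists>T TE (\<chi>::nat \<Rightarrow> 'v set). TD T TE \<chi> \<and> 0 \<in> T \<and> \<chi> 0 = {xs, xt} \<and>
     (\<forall>t\<in>T. \<chi> t \<subseteq> {xs, xt} \<union> (\<Union>q\<in>S. set q)) \<and> (\<forall>t\<in>T. \<chi> t \<subseteq> V) \<and>
     (\<forall>t\<in>T. cheap (\<chi> t)) \<and> (\<forall>p\<in>S. \<forall>e\<in>path_edges p. \<exists>t\<in>T. e \<subseteq> \<chi> t))"

lemma Inv_empty: "Inv {}"
proof -
  have td: "TD {0..<0+1} (PE 0 1) (\<lambda>t. (\<lambda>_. {xs, xt}) (t - 0))"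
    by (rule TD_path) auto
  have sv: "{xs, xt} \<subseteq> V" using Vdef by auto
  show ?thesis unfolding Inv_def
    apply (rule exI[where x="{0..<0+1}"])
    apply (rule exI[where x="PE 0 1"])
    apply (rule exI[where x="\<lambda>_. {xs, xt}"])
    using td sv cheap_st by auto
qed

lemma Inv_insert:
  assumes I: "Inv F" and p: "p \<in> Ps" and pF: "p \<notin> F" and FP: "F \<subseteq> Ps"
  shows "Inv (insert p F)"
proof -
  obtain T TE and \<chi> :: "nat \<Rightarrow> 'v set" where H:
    "TD T TE \<chi> \<and> 0 \<in> T \<and> \<chi> 0 = {xs, xt} \<and>
     (\<forall>t\<in>T. \<chi> t \<subseteq> {xs, xt} \<union> (\<Union>q\<in>F. set q)) \<and> (\<forall>t\<in>T. \<chi> t \<subseteq> V) \<and>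
     (\<forall>t\<in>T. cheap (\<chi> t)) \<and> (\<forall>p\<in>F. \<forall>e\<in>path_edges p. \<exists>t\<in>T. e \<subseteq> \<chi> t)"
    apply (insert I[unfolded Inv_def]) apply (elim exE) apply (rule that) apply assumption done
  have td: "TD T TE \<chi>" and z0: "0 \<in> T" and c0: "\<chi> 0 = {xs, xt}"
    and sub1: "\<forall>t\<in>T. \<chi> t \<subseteq> {xs, xt} \<union> (\<Union>q\<in>F. set q)" and sub2: "\<forall>t\<in>T. \<chi> t \<subseteq> V"
    and ch: "\<forall>t\<in>T. cheap (\<chi> t)" and cov: "\<forall>p\<in>F. \<forall>e\<in>path_edges p. \<exists>t\<in>T. e \<subseteq> \<chi> t"
    using H by simp_all
  obtain n and B :: "nat \<Rightarrow> 'v set" and j where H2: "1 \<le> n \<and>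
     (\<forall>x i m k. i \<le> m \<longrightarrow> m \<le> k \<longrightarrow> k < n \<longrightarrow> x \<in> B i \<longrightarrow> x \<in> B k \<longrightarrow> x \<in> B m) \<and>
     (\<forall>i<n. B i \<subseteq> set p \<and> cheap (B i)) \<and> j < n \<and> {xs, xt} \<subseteq> B j \<and>
     (\<forall>e\<in>path_edges p. \<exists>i<n. e \<subseteq> B i)"
    apply (insert leg_exists[OF p]) apply (elim exE) apply (rule that) apply assumption done
  have n1: "1 \<le> n"
    and contig: "\<forall>x i m k. i \<le> m \<longrightarrow> m \<le> k \<longrightarrow> k < n \<longrightarrow> x \<in> B i \<longrightarrow> x \<in> B k \<longrightarrow> x \<in> B m"
    and bags: "\<forall>i<n. B i \<subseteq> set p \<and> cheap (B i)" and jn: "j < n" and stj: "{xs, xt} \<subseteq> B j"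
    and covp: "\<forall>e\<in>path_edges p. \<exists>i<n. e \<subseteq> B i"
    using H2 by simp_all
  have finT: "finite T" using td unfolding TD_def is_tree_def by blast
  define z where "z = Suc (Max T)"
  have Tz: "t < z" if "t \<in> T" for t using finT that unfolding z_def by (simp add: le_imp_less_Suc)
  define \<chi>' where "\<chi>' t = (if t \<in> T then \<chi> t else B (t - z))" for t
  have td1: "TD T TE \<chi>'" by (rule TD_cong[OF td]) (simp add: \<chi>'_def)
  have td2': "TD {z..<z+n} (PE z n) (\<lambda>t. B (t - z))"
    by (rule TD_path[OF n1]) (use contig in blast)
  have td2: "TD {z..<z+n} (PE z n) \<chi>'"
  proof (rule TD_cong[OF td2'])
    fix t assume "t \<in> {z..<z+n}"
    then have "t \<notin> T" using Tz by fastforce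
    then show "\<chi>' t = B (t - z)" unfolding \<chi>'_def by simp
  qed
  have dj: "T \<inter> {z..<z+n} = {}" using Tz by fastforce
  have u2: "z + j \<in> {z..<z+n}" using jn by simp
  have sh: "x \<in> \<chi>' 0 \<and> x \<in> \<chi>' (z + j)"
    if a: "a \<in> T" and b: "b \<in> {z..<z+n}" and xa: "x \<in> \<chi>' a" and xb: "x \<in> \<chi>' b" for x a b
  proof -
    have bT: "b \<notin> T" using b Tz by fastforce
    have "x \<in> B (b - z)" using xb bT unfolding \<chi>'_def by simp
    moreover have "b - z < n" using b by auto
    ultimately have xp: "x \<in> set p" using bags by blast
    have "x \<in> {xs, xt} \<union> (\<Union>q\<in>F. set q)" using sub1 a xa unfolding \<chi>'_def by auto
    then have "x \<in> {xs, xt}"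
    proof
      assume "x \<in> (\<Union>q\<in>F. set q)"
      then obtain q where q: "q \<in> F" "x \<in> set q" by blast
      have "q \<noteq> p" using q pF by blast
      then have "set p \<inter> set q = {xs, xt}" using disjP[OF p] FP q by blast
      then show ?thesis using xp q by blast
    qed simp
    moreover have "z + j \<notin> T" using Tz by fastforce
    ultimately show ?thesis using c0 z0 stj unfolding \<chi>'_def by auto
  qed
  have tdn: "TD (T \<union> {z..<z+n}) (TE \<union> PE z n \<union> {(0, z + j), (z + j, 0)}) \<chi>'"
    by (rule TD_glue[OF td1 td2 dj z0 u2]) (use sh in blast)
  have leg_node: "\<chi>' t = B (t - z) \<and> t - z < n" if "t \<in> {z..<z+n}" for t
  proof -
    have "t \<notin> T" using that Tz by fastforce
    then show ?thesis using that unfolding \<chi>'_def by auto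
  qed
  show ?thesis unfolding Inv_def
    apply (rule exI[where x="T \<union> {z..<z+n}"])
    apply (rule exI[where x="TE \<union> PE z n \<union> {(0, z + j), (z + j, 0)}"])
    apply (rule exI[where x="\<chi>'"])
  proof (intro conjI)
    show "TD (T \<union> {z..<z+n}) (TE \<union> PE z n \<union> {(0, z + j), (z + j, 0)}) \<chi>'" by (rule tdn)
    show "0 \<in> T \<union> {z..<z+n}" using z0 by simp
    show "\<chi>' 0 = {xs, xt}" using z0 c0 unfolding \<chi>'_def by simp
    show "\<forall>t\<in>T \<union> {z..<z+n}. \<chi>' t \<subseteq> {xs, xt} \<union> (\<Union>q\<in>insert p F. set q)"
    proof
      fix t assume t: "t \<in> T \<union> {z..<z+n}"
      show "\<chi>' t \<subseteq> {xs, xt} \<union> (\<Union>q\<in>insert p F. set q)"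
      proof (cases "t \<in> T")
        case True then show ?thesis using sub1 unfolding \<chi>'_def by auto
      next
        case False then have "t \<in> {z..<z+n}" using t by blast
        then show ?thesis using leg_node bags by fastforce
      qed
    qed
    show "\<forall>t\<in>T \<union> {z..<z+n}. \<chi>' t \<subseteq> V"
    proof
      fix t assume t: "t \<in> T \<union> {z..<z+n}"
      show "\<chi>' t \<subseteq> V"
      proof (cases "t \<in> T")
        case True then show ?thesis using sub2 unfolding \<chi>'_def by auto
      next
        case False then have "t \<in> {z..<z+n}" using t by blast
        then show ?thesis using leg_node bags setp_V[OF p] by fastforce
      qed
    qed
    show "\<forall>t\<in>T \<union> {z..<z+n}. cheap (\<chi>' t)"
    proof
      fix t assume t: "t \<in> T \<union> {z..<z+n}"
      show "cheap (\<chi>' t)"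
      proof (cases "t \<in> T")
        case True then show ?thesis using ch unfolding \<chi>'_def by auto
      next
        case False then have "t \<in> {z..<z+n}" using t by blast
        then show ?thesis using leg_node bags by fastforce
      qed
    qed
    show "\<forall>q\<in>insert p F. \<forall>e\<in>path_edges q. \<exists>t\<in>T \<union> {z..<z+n}. e \<subseteq> \<chi>' t"
    proof (intro ballI)
      fix q e assume q: "q \<in> insert p F" and e: "e \<in> path_edges q"
      show "\<exists>t\<in>T \<union> {z..<z+n}. e \<subseteq> \<chi>' t"
      proof (cases "q = p")
        case True
        then obtain i where i: "i < n" "e \<subseteq> B i" using covp e by blast
        have "z + i \<in> {z..<z+n}" using i by simp
        moreover have "\<chi>' (z + i) = B i" using leg_node[of "z + i"] i by simp
        ultimately show ?thesis using i by blast
      next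
        case False
        then have "q \<in> F" using q by blast
        then obtain t where "t \<in> T" "e \<subseteq> \<chi> t" using cov e by blast
        then show ?thesis unfolding \<chi>'_def by auto
      qed
    qed
  qed
qed

lemma Inv_all: "Inv Ps"
proof -
  have "Inv S" if "S \<subseteq> Ps" for S
  proof -
    have "finite S" using that finPs finite_subset by blast
    then show ?thesis using that
    proof (induction S rule: finite_induct)
      case empty show ?case by (rule Inv_empty)
    next
      case (insert p F)
      then show ?case using Inv_insert by blast
    qed
  qed
  then show ?thesis by blast
qed

lemma ghd_exists: "\<exists>T TE (\<chi>::nat \<Rightarrow> 'v set). is_ghd V E T TE \<chi> \<and> (\<forall>t\<in>T. cheap (\<chi> t))"
proof -
  obtain T TE and \<chi> :: "nat \<Rightarrow> 'v set" where H:
    "TD T TE \<chi> \<and> 0 \<in> T \<and> \<chi> 0 = {xs, xt} \<and>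
     (\<forall>t\<in>T. \<chi> t \<subseteq> {xs, xt} \<union> (\<Union>q\<in>Ps. set q)) \<and> (\<forall>t\<in>T. \<chi> t \<subseteq> V) \<and>
     (\<forall>t\<in>T. cheap (\<chi> t)) \<and> (\<forall>p\<in>Ps. \<forall>e\<in>path_edges p. \<exists>t\<in>T. e \<subseteq> \<chi> t)"
    apply (insert Inv_all[unfolded Inv_def]) apply (elim exE) apply (rule that) apply assumption done
  have td: "TD T TE \<chi>" and sub2: "\<forall>t\<in>T. \<chi> t \<subseteq> V"
    and ch: "\<forall>t\<in>T. cheap (\<chi> t)" and cov: "\<forall>p\<in>Ps. \<forall>e\<in>path_edges p. \<exists>t\<in>T. e \<subseteq> \<chi> t"
    using H by simp_all
  have covE: "\<forall>e\<in>E. \<exists>t\<in>T. e \<subseteq> \<chi> t" using cov unfolding Edef by blast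
  have "is_ghd V E T TE \<chi>" unfolding is_ghd_def using td sub2 covE unfolding TD_def by blast
  then show ?thesis using ch by blast
qed

end

context sp begin

lemma unionE: "\<Union>E = V"
proof
  show "\<Union>E \<subseteq> V" using edge_sub by blast
  show "V \<subseteq> \<Union>E"
  proof
    fix v assume "v \<in> V"
    then consider "v \<in> {xs, xt}" | p where "p \<in> Ps" "v \<in> set p" using Vdef by blast
    then show "v \<in> \<Union>E"
    proof cases
      case 1 then show ?thesis using st by blast
    next
      case 2
      then obtain i where i: "i < length p" "p ! i = v" by (auto simp: in_set_conv_nth)
      have l2: "2 \<le> length p" using pathP[OF 2(1)] by simp
      show ?thesis
      proof (cases "i + 1 < length p")
        case True then show ?thesis using pe_mem[OF 2(1) True] i by blast
      next
        case False
        then have a: "(i - 1) + 1 < length p" and b: "p ! (i - 1 + 1) = v" using i l2 by auto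
        show ?thesis using pe_mem[OF 2(1) a] b by blast
      qed
    qed
  qed
qed

lemma s_V:
  assumes f: "feasible IN V E R s"
  shows "s V \<le> real (card E) * ell"
proof -
  have "E' \<subseteq> E \<Longrightarrow> s (\<Union>E') \<le> real (card E') * ell" for E'
  proof -
    assume "E' \<subseteq> E"
    have "finite E'" using \<open>E' \<subseteq> E\<close> finE finite_subset by auto
    then show ?thesis using \<open>E' \<subseteq> E\<close>
    proof (induction E' rule: finite_induct)
      case empty then show ?case using feas_empty[OF f] by simp
    next
      case (insert e E'')
      have e: "e \<in> E" using insert by blast
      have XV: "\<Union>E'' \<subseteq> V" using insert edge_sub by blast
      have "s (e \<union> \<Union>E'') \<le> s ({} \<union> \<Union>E'') + dlog IN {} e (R e)"
        by (rule feas_step[OF f e XV]) auto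
      moreover have "dlog IN {} e (R e) \<le> ell"
        unfolding R_def ell_def using rel_props[OF e] Nge by (intro dlog_B1[OF IN_gt1]) auto
      moreover have "s (\<Union>E'') \<le> real (card E'') * ell" using insert by blast
      ultimately show ?case using insert by (simp add: algebra_simps)
    qed
  qed
  then show ?thesis using unionE by (metis order_refl)
qed

lemma zero_feas: "feasible IN V E R (\<lambda>_. 0)"
  unfolding feasible_def dlog_def using log_nat_nonneg[OF IN_gt1] by auto

lemma mval_bdd: "F \<subseteq> V \<Longrightarrow> bdd_above {s F | s. feasible IN V E R s}"
proof -
  assume F: "F \<subseteq> V"
  have "s F \<le> real (card E) * ell" if "feasible IN V E R s" for s
    using feas_mono[OF that F] s_V[OF that] by simp
  then show ?thesis unfolding bdd_above_def by blast
qed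

lemma mval_nonneg: "F \<subseteq> V \<Longrightarrow> 0 \<le> mval IN V E R F"
proof -
  assume F: "F \<subseteq> V"
  have "(0::real) \<in> {s F | s. feasible IN V E R s}" using zero_feas by force
  then show ?thesis unfolding mval_def by (rule cSup_upper[OF _ mval_bdd[OF F]])
qed

lemma mval_cheap: "cheap F \<Longrightarrow> mval IN V E R F \<le> 2 - \<delta>"
proof -
  assume ch: "cheap F"
  have ne: "{s F | s. feasible IN V E R s} \<noteq> {}" using zero_feas by blast
  show ?thesis unfolding mval_def
    by (rule cSup_least[OF ne]) (use ch in \<open>auto simp: cheap_def\<close>)
qed

lemma MW_le: "MW IN V E R \<le> 2 - \<delta>"
proof -
  obtain T TE and \<chi> :: "nat \<Rightarrow> 'v set" where gc: "is_ghd V E T TE \<chi> \<and> (\<forall>t\<in>T. cheap (\<chi> t))"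
    apply (insert ghd_exists) apply (elim exE) apply (rule that) apply assumption done
  have g: "is_ghd V E T TE \<chi>" and ch: "\<forall>t\<in>T. cheap (\<chi> t)" using gc by simp_all
  have finT: "finite T" "T \<noteq> {}" using g unfolding is_ghd_def is_tree_def by auto
  have w: "MW_ghd IN V E R T \<chi> \<le> 2 - \<delta>"
    unfolding MW_ghd_def using finT ch mval_cheap by (simp add: Max_le_iff)
  let ?X = "{MW_ghd IN V E R T \<chi> | T TE (\<chi> :: nat \<Rightarrow> 'v set). is_ghd V E T TE \<chi>}"
  have bdd: "bdd_below ?X"
  proof (rule bdd_belowI)
    fix y assume "y \<in> ?X"
    then obtain T' TE' and \<chi>' :: "nat \<Rightarrow> 'v set" where y: "y = MW_ghd IN V E R T' \<chi>'" and g': "is_ghd V E T' TE' \<chi>'"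
      by blast
    have fin': "finite T'" "T' \<noteq> {}" using g' unfolding is_ghd_def is_tree_def by auto
    then obtain t0 where t0: "t0 \<in> T'" by blast
    have "\<chi>' t0 \<subseteq> V" using g' t0 unfolding is_ghd_def by blast
    then have "0 \<le> mval IN V E R (\<chi>' t0)" by (rule mval_nonneg)
    also have "\<dots> \<le> MW_ghd IN V E R T' \<chi>'" unfolding MW_ghd_def using fin' t0 by (intro Max_ge) auto
    finally show "0 \<le> y" using y by simp
  qed
  have "MW IN V E R \<le> MW_ghd IN V E R T \<chi>"
    unfolding MW_def by (rule cInf_lower[OF _ bdd]) (use g in blast)
  then show ?thesis using w by simp
qed

lemma MW_final: "MW (real (input_size E rel)) V E (restrict_config rel c) \<le> 2 - \<delta>"
  using MW_le unfolding IN_def R_def .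

end

lemma config_nonempty:
  assumes "\<forall>e\<in>E. e \<noteq> {}"
  shows "(\<lambda>e A. if A = {} then nat \<lfloor>log 2 (real (card (rel e)))\<rfloor> else 0) \<in> degree_configs E rel"
  unfolding degree_configs_def using assms by auto

theorem lemmaF3:
  fixes V :: "'v set" and E :: "'v set set" and xs xt :: 'v
  assumes "finite V"
    and "one_sp_graph V E xs xt"
    and "{xs, xt} \<in> E"
  shows "\<exists>\<epsilon>::real. \<epsilon> > 0 \<and> (\<exists>N0::nat. \<forall>N\<ge>N0. \<forall>rel :: 'v set \<Rightarrow> ('v \<Rightarrow> 'd) set.
           join_instance E rel N \<longrightarrow> m_width V E rel \<le> 2 - \<epsilon>)"
proof -
  obtain Ps where H: "xs \<noteq> xt \<and> finite Ps \<and>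
        (\<forall>p\<in>Ps. 2 \<le> length p \<and> hd p = xs \<and> last p = xt \<and> distinct p) \<and>
        (\<forall>p\<in>Ps. \<forall>q\<in>Ps. p \<noteq> q \<longrightarrow> set p \<inter> set q = {xs, xt}) \<and>
        V = {xs, xt} \<union> (\<Union>p\<in>Ps. set p) \<and>
        E = (\<Union>p\<in>Ps. path_edges p)"
    using assms(2) unfolding one_sp_graph_def by blast
  define \<epsilon> where "\<epsilon> = 1 / (4 * real (card V))"
  have "xs \<in> V" using H by blast
  then have "card V > 0" using assms(1) card_gt_0_iff by blast
  then have epos: "\<epsilon> > 0" unfolding \<epsilon>_def by simp
  have ene: "\<forall>e\<in>E. e \<noteq> {}" using H unfolding path_edges_def by auto
  have main: "m_width V E rel \<le> 2 - \<epsilon>"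
    if N: "N \<ge> 4 ^ card V" and ji: "join_instance E rel N" for N and rel :: "'v set \<Rightarrow> ('v \<Rightarrow> 'd) set"
  proof -
    have each: "MW (real (input_size E rel)) V E (restrict_config rel c) \<le> 2 - \<epsilon>"
      if c: "c \<in> degree_configs E rel" for c
    proof -
      have "sp V E xs xt Ps rel N \<epsilon>"
        by (unfold_locales) (use assms H N ji in \<open>auto simp: \<epsilon>_def\<close>)
      then show ?thesis by (rule sp.MW_final)
    qed
    have ne: "{MW (real (input_size E rel)) V E (restrict_config rel c) | c. c \<in> degree_configs E rel} \<noteq> {}"
      using config_nonempty[OF ene] by blast
    show ?thesis unfolding m_width_def
      by (rule cSup_least[OF ne]) (use each in blast)
  qed
  show ?thesis
    apply (rule exI[where x=\<epsilon>])
    using epos main by blast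
qed

end
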